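(* Let $S$ be an $E$-demigroup, and let $E,E'\subseteq E(S)$ be right pre-reduced sets together with a bijection $E\to E'$, $e\mapsto e'$, such that $e\sim_r e'$ for all $e\in E$. Suppose $d(S)\subseteq E'$ and $d(e)=d(e')$ for all $e\in E$. Then $S$ is an $E'$-demigroup with respect to the same operation $d$, and the map $(e,s)\mapsto(e',e's)$ is an isomorphism of constellations from $C^d_E(S)$ onto $C^d_{E'}(S)$ (with inverse $(e',s)\mapsto(e,es)$). In particular, if $S$ is a left $E$-monoid then $C_E(S)\cong C_{E'}(S)$, and if $S$ is a left $E$-monoid with zero then $C^0_E(S)\cong C^0_{E'}(S)$.
   Context: For a semigroup $S$, $E(S)$ is its set of idempotents. For $e,f\in E(S)$, $e\le_r f$ iff $e=ef$, and $e\sim_r f$ iff $e\le_r f$ and $f\le_r e$. A subset $E\subseteq E(S)$ is right pre-reduced if $e=ef$ and $f=fe$ imply $e=f$ for all $e,f\in E$. A demigroup is a semigroup $S$ with a unary operation $d$ such that for all $x,y\in S$: $d(x)\in E(S)$, $d(x)x=x$ and $d(xy)=d(xd(y))$; $d(S)=\{d(s)\mid s\in S\}$. For $E\subseteq E(S)$, a demigroup $S$ is an $E$-demigroup if $d(s)\in E$ for all $s\in S$ and $ed(e)=e$ for all $e\in E$. $C_E(S)=\{(e,s)\in E\times S\mid es=s\}$ with partial product $(e,s)\circ(f,t)=(e,st)$ defined exactly when $sf=s$, and $D((e,s))=(e,e)$; $C^d_E(S)=\{(e,s)\in C_E(S)\mid d(e)=d(s)\}$ with the restricted operations (these are constellations).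 Let $S$ be a monoid with $1\in E\subseteq E(S)$. $S$ regarded as an $E$-demigroup via $d(s)=1$ for all $s$ is a left $E$-monoid; then $C^d_E(S)=C_E(S)$. If $S$ has a zero $0$, is integral ($st=0$ implies $s=0$ or $t=0$) and $0\in E$, then $S$ regarded as an $E$-demigroup via $d(0)=0$ and $d(s)=1$ for $s\neq0$ is a left $E$-monoid with zero; then $C^d_E(S)=C^0_E(S):=\{(e,s)\in C_E(S)\mid s=0\Rightarrow e=0\}$. An isomorphism of constellations $\rho:P\to Q$ is a bijection such that $\rho(D(s))=D(\rho(s))$ for all $s$, and $s\circ t$ exists iff $\rho(s)\circ\rho(t)$ exists, in which case $\rho(s\circ t)=\rho(s)\circ\rho(t)$. *)

theory Defs
  imports Main
begin

text \<open>The semigroup S is the whole type 'a of class semigroup_mult.\<close>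

definition idems :: "'a::semigroup_mult set" where
  "idems = {e. e * e = e}"

definition le_r :: "'a::semigroup_mult \<Rightarrow> 'a \<Rightarrow> bool" where
  "le_r e f \<longleftrightarrow> e = e * f"

definition sim_r :: "'a::semigroup_mult \<Rightarrow> 'a \<Rightarrow> bool" where
  "sim_r e f \<longleftrightarrow> le_r e f \<and> le_r f e"

definition right_pre_reduced :: "'a::semigroup_mult set \<Rightarrow> bool" where
  "right_pre_reduced E \<longleftrightarrow> (\<forall>e\<in>E. \<forall>f\<in>E. e = e * f \<and> f = f * e \<longrightarrow> e = f)"

definition demigroup :: "('a::semigroup_mult \<Rightarrow> 'a) \<Rightarrow> bool" where
  "demigroup d \<longleftrightarrow> (\<forall>x. d x \<in> idems \<and> d x * x = x) \<and> (\<forall>x y. d (x * y) = d (x * d y))"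

definition E_demigroup :: "'a::semigroup_mult set \<Rightarrow> ('a \<Rightarrow> 'a) \<Rightarrow> bool" where
  "E_demigroup E d \<longleftrightarrow> demigroup d \<and> (\<forall>s. d s \<in> E) \<and> (\<forall>e\<in>E. e * d e = e)"

definition CE :: "'a::semigroup_mult set \<Rightarrow> ('a \<times> 'a) set" where
  "CE E = {(e, s). e \<in> E \<and> e * s = s}"

definition CdE :: "'a::semigroup_mult set \<Rightarrow> ('a \<Rightarrow> 'a) \<Rightarrow> ('a \<times> 'a) set" where
  "CdE E d = {(e, s) \<in> CE E. d e = d s}"

definition C0E :: "'a::semigroup_mult \<Rightarrow> 'a set \<Rightarrow> ('a \<times> 'a) set" where
  "C0E z E = {(e, s) \<in> CE E. s = z \<longrightarrow> e = z}"

definition C_D :: "'a::semigroup_mult \<times> 'a \<Rightarrow> 'a \<times> 'a" where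
  "C_D x = (fst x, fst x)"

definition C_defined :: "'a::semigroup_mult \<times> 'a \<Rightarrow> 'a \<times> 'a \<Rightarrow> bool" where
  "C_defined x y \<longleftrightarrow> snd x * fst y = snd x"

definition C_prod :: "'a::semigroup_mult \<times> 'a \<Rightarrow> 'a \<times> 'a \<Rightarrow> 'a \<times> 'a" where
  "C_prod x y = (fst x, snd x * snd y)"

text \<open>Isomorphism of constellations (all constellations here are subsets of
  E x S with the restricted operations C_D, C_defined, C_prod).\<close>

definition constellation_iso :: "('a::semigroup_mult \<times> 'a) set \<Rightarrow> ('a \<times> 'a) set \<Rightarrow> ('a \<times> 'a \<Rightarrow> 'a \<times> 'a) \<Rightarrow> bool" where
  "constellation_iso P Q \<rho> \<longleftrightarrow> bij_betw \<rho> P Q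
     \<and> (\<forall>x\<in>P. \<rho> (C_D x) = C_D (\<rho> x))
     \<and> (\<forall>x\<in>P. \<forall>y\<in>P. (C_defined x y \<longleftrightarrow> C_defined (\<rho> x) (\<rho> y))
                      \<and> (C_defined x y \<longrightarrow> \<rho> (C_prod x y) = C_prod (\<rho> x) (\<rho> y)))"

definition is_identity :: "'a::semigroup_mult \<Rightarrow> bool" where
  "is_identity u \<longleftrightarrow> (\<forall>x. u * x = x \<and> x * u = x)"

definition is_zero :: "'a::semigroup_mult \<Rightarrow> bool" where
  "is_zero z \<longleftrightarrow> (\<forall>x. z * x = z \<and> x * z = z)"

definition integral_zero :: "'a::semigroup_mult \<Rightarrow> bool" where
  "integral_zero z \<longleftrightarrow> (\<forall>s t. s * t = z \<longrightarrow> s = z \<or> t = z)"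

end

theory Submission
  imports Defs
begin

lemma part1:
  fixes E E' :: "'a::semigroup_mult set" and \<phi> :: "'a \<Rightarrow> 'a" and d
  assumes EI: "E \<subseteq> idems" and E'I: "E' \<subseteq> idems"
    and bij: "bij_betw \<phi> E E'"
    and sim: "\<forall>e\<in>E. sim_r e (\<phi> e)"
    and ED: "E_demigroup E d" and dE': "\<forall>s. d s \<in> E'" and de: "\<forall>e\<in>E. d e = d (\<phi> e)"
  shows "E_demigroup E' d
        \<and> constellation_iso (CdE E d) (CdE E' d) (\<lambda>(e, s). (\<phi> e, \<phi> e * s))
        \<and> (\<forall>x\<in>CdE E d. (\<lambda>(e', s). (the_inv_into E \<phi> e', the_inv_into E \<phi> e' * s))
                             ((\<lambda>(e, s). (\<phi> e, \<phi> e * s)) x) = x)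
        \<and> (\<forall>y\<in>CdE E' d. (\<lambda>(e, s). (\<phi> e, \<phi> e * s))
                             ((\<lambda>(e', s). (the_inv_into E \<phi> e', the_inv_into E \<phi> e' * s)) y) = y)"
proof -
  have inj: "inj_on \<phi> E" and img: "\<phi> ` E = E'" using bij by (auto simp: bij_betw_def)
  have dm: "demigroup d" and dEE: "\<forall>s. d s \<in> E" and ede: "\<forall>e\<in>E. e * d e = e"
    using ED by (auto simp: E_demigroup_def)
  have dax: "\<And>x y. d (x * y) = d (x * d y)" using dm by (simp add: demigroup_def)
  have s1: "\<And>e. e \<in> E \<Longrightarrow> e = e * \<phi> e" and s2: "\<And>e. e \<in> E \<Longrightarrow> \<phi> e = \<phi> e * e"
    using sim by (auto simp: sim_r_def le_r_def)
  have idm: "\<And>e. e \<in> E \<Longrightarrow> e * e = e" using EI by (auto simp: idems_def)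
  have idm': "\<And>e. e \<in> E \<Longrightarrow> \<phi> e * \<phi> e = \<phi> e" using E'I img by (auto simp: idems_def)
  have pe: "\<And>e. e \<in> E \<Longrightarrow> \<phi> e \<in> E'" using img by auto
  have ed': "\<And>e. e \<in> E \<Longrightarrow> \<phi> e * d (\<phi> e) = \<phi> e"
  proof -
    fix e assume e: "e \<in> E"
    have "\<phi> e * d (\<phi> e) = \<phi> e * e * d e" using e de s2 by metis
    also have "\<dots> = \<phi> e * e" using e ede by (simp add: mult.assoc)
    also have "\<dots> = \<phi> e" using s2 e by metis
    finally show "\<phi> e * d (\<phi> e) = \<phi> e" .
  qed
  have ED': "E_demigroup E' d"
    unfolding E_demigroup_def using dm dE' ed' img by auto
  let ?r = "\<lambda>(e, s). (\<phi> e, \<phi> e * s)"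
  let ?i = "\<lambda>(e', s). (the_inv_into E \<phi> e', the_inv_into E \<phi> e' * s)"
  have inv1: "\<forall>x\<in>CdE E d. ?i (?r x) = x"
  proof
    fix x assume "x \<in> CdE E d"
    then obtain e s where x: "x = (e, s)" "e \<in> E" "e * s = s" by (auto simp: CdE_def CE_def)
    have "e * (\<phi> e * s) = s" using x s1 by (metis mult.assoc)
    then show "?i (?r x) = x" using x the_inv_into_f_f[OF inj] by simp
  qed
  have inv2: "\<forall>y\<in>CdE E' d. ?r (?i y) = y"
  proof
    fix y assume "y \<in> CdE E' d"
    then obtain e' s where y: "y = (e', s)" "e' \<in> E'" "e' * s = s" by (auto simp: CdE_def CE_def)
    define e where "e = the_inv_into E \<phi> e'"
    have e: "e \<in> E" "\<phi> e = e'" using y img inj unfolding e_def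
      by (auto intro: the_inv_into_into f_the_inv_into_f)
    have "e' * (e * s) = s" using e y s2 by (metis mult.assoc)
    then show "?r (?i y) = y" using y e e_def by simp
  qed
  have map1: "\<And>x. x \<in> CdE E d \<Longrightarrow> ?r x \<in> CdE E' d"
  proof -
    fix x assume "x \<in> CdE E d"
    then obtain e s where x: "x = (e, s)" "e \<in> E" "e * s = s" "d e = d s" by (auto simp: CdE_def CE_def)
    have a: "\<phi> e * (\<phi> e * s) = \<phi> e * s" using idm' x by (metis mult.assoc)
    have "d (\<phi> e * s) = d (\<phi> e * d (\<phi> e))" using dax x de by metis
    then have b: "d (\<phi> e * s) = d (\<phi> e)" using ed' x by simp
    have "d (\<phi> e) = d s" using de x by simp
    then show "?r x \<in> CdE E' d" using a b x pe by (simp add: CdE_def CE_def)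
  qed
  have map2: "\<And>y. y \<in> CdE E' d \<Longrightarrow> ?i y \<in> CdE E d"
  proof -
    fix y assume "y \<in> CdE E' d"
    then obtain e' s where y: "y = (e', s)" "e' \<in> E'" "e' * s = s" "d e' = d s" by (auto simp: CdE_def CE_def)
    define e where "e = the_inv_into E \<phi> e'"
    have e: "e \<in> E" "\<phi> e = e'" using y img inj unfolding e_def
      by (auto intro: the_inv_into_into f_the_inv_into_f)
    have a: "e * (e * s) = e * s" using idm e by (metis mult.assoc)
    have "d (e * s) = d (e * d e)" using dax y e de by metis
    then have b: "d (e * s) = d e" using ede e by simp
    have "d e = d s" using de e y by simp
    then show "?i y \<in> CdE E d" using a b e y e_def by (simp add: CdE_def CE_def)
  qed
  have bj: "bij_betw ?r (CdE E d) (CdE E' d)"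
    by (rule bij_betw_byWitness[where f'="?i"]) (use inv1 inv2 map1 map2 in auto)
  have cd: "\<forall>x\<in>CdE E d. ?r (C_D x) = C_D (?r x)"
  proof
    fix x assume "x \<in> CdE E d"
    then obtain e s where x: "x = (e, s)" "e \<in> E" by (auto simp: CdE_def CE_def)
    then show "?r (C_D x) = C_D (?r x)" using s2 by (simp add: C_D_def)
  qed
  have pr: "\<forall>x\<in>CdE E d. \<forall>y\<in>CdE E d. (C_defined x y \<longleftrightarrow> C_defined (?r x) (?r y))
                      \<and> (C_defined x y \<longrightarrow> ?r (C_prod x y) = C_prod (?r x) (?r y))"
  proof (intro ballI)
    fix x y assume "x \<in> CdE E d" "y \<in> CdE E d"
    then obtain e s f t where x: "x = (e, s)" "e \<in> E" "e * s = s" and y: "y = (f, t)" "f \<in> E"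
      by (auto simp: CdE_def CE_def)
    have A: "s * f = s \<Longrightarrow> s * \<phi> f = s"
      using s1[OF y(2)] by (metis mult.assoc)
    have B: "\<phi> e * s * \<phi> f = \<phi> e * s \<Longrightarrow> s * f = s"
    proof -
      assume h: "\<phi> e * s * \<phi> f = \<phi> e * s"
      have "e * (\<phi> e * s * \<phi> f) = e * (\<phi> e * s)" using h by simp
      then have "s * \<phi> f = s" using s1[OF x(2)] x(3) by (metis mult.assoc)
      then show "s * f = s" using s2[OF y(2)] by (metis mult.assoc)
    qed
    show "(C_defined x y \<longleftrightarrow> C_defined (?r x) (?r y))
                      \<and> (C_defined x y \<longrightarrow> ?r (C_prod x y) = C_prod (?r x) (?r y))"
    proof -
      have C: "s * f = s \<Longrightarrow> \<phi> e * (s * (\<phi> f * t)) = \<phi> e * (s * t)"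
        using A by (metis mult.assoc)
      show ?thesis using A B C x y by (auto simp: C_defined_def C_prod_def mult.assoc)
    qed
  qed
  show ?thesis using ED' bj cd pr inv1 inv2 by (simp add: constellation_iso_def)
qed

lemma CdE_C0E:
  fixes F :: "'a::semigroup_mult set"
  assumes u: "is_identity u" and z: "is_zero z"
    and d: "d = (\<lambda>x. if x = z then z else u)"
  shows "CdE F d = C0E z F"
proof (cases "u = z")
  case True
  then have "\<And>x. x = z" using u z by (metis is_identity_def is_zero_def)
  then have "\<And>a b. d a = d b \<and> (a = b)" by metis
  then show ?thesis unfolding CdE_def C0E_def by auto
next
  case False
  show ?thesis unfolding CdE_def C0E_def CE_def using False d z
    by (auto simp: is_zero_def split: if_splits)
qed

theorem proposition3p4:
  fixes E E' :: "'a::semigroup_mult set" and \<phi> :: "'a \<Rightarrow> 'a"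
  assumes "E \<subseteq> idems" and "E' \<subseteq> idems"
    and "right_pre_reduced E" and "right_pre_reduced E'"
    and "bij_betw \<phi> E E'"
    and "\<forall>e\<in>E. sim_r e (\<phi> e)"
  shows
    "(\<forall>d :: 'a \<Rightarrow> 'a.
        E_demigroup E d \<and> (\<forall>s. d s \<in> E') \<and> (\<forall>e\<in>E. d e = d (\<phi> e)) \<longrightarrow>
          E_demigroup E' d
        \<and> constellation_iso (CdE E d) (CdE E' d) (\<lambda>(e, s). (\<phi> e, \<phi> e * s))
        \<and> (\<forall>x\<in>CdE E d. (\<lambda>(e', s). (the_inv_into E \<phi> e', the_inv_into E \<phi> e' * s))
                             ((\<lambda>(e, s). (\<phi> e, \<phi> e * s)) x) = x)
        \<and> (\<forall>y\<in>CdE E' d. (\<lambda>(e, s). (\<phi> e, \<phi> e * s))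
                             ((\<lambda>(e', s). (the_inv_into E \<phi> e', the_inv_into E \<phi> e' * s)) y) = y))
     \<and> (\<forall>u :: 'a. is_identity u \<and> u \<in> E \<longrightarrow> (\<exists>\<rho>. constellation_iso (CE E) (CE E') \<rho>))
     \<and> (\<forall>u z :: 'a. is_identity u \<and> is_zero z \<and> integral_zero z \<and> u \<in> E \<and> z \<in> E \<longrightarrow>
          (\<exists>\<rho>. constellation_iso (C0E z E) (C0E z E') \<rho>))"
proof (intro conjI[OF allI[OF impI]] allI impI)
  fix d :: "'a \<Rightarrow> 'a"
  assume "E_demigroup E d \<and> (\<forall>s. d s \<in> E') \<and> (\<forall>e\<in>E. d e = d (\<phi> e))"
  then show "E_demigroup E' d
        \<and> constellation_iso (CdE E d) (CdE E' d) (\<lambda>(e, s). (\<phi> e, \<phi> e * s))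
        \<and> (\<forall>x\<in>CdE E d. (\<lambda>(e', s). (the_inv_into E \<phi> e', the_inv_into E \<phi> e' * s))
                             ((\<lambda>(e, s). (\<phi> e, \<phi> e * s)) x) = x)
        \<and> (\<forall>y\<in>CdE E' d. (\<lambda>(e, s). (\<phi> e, \<phi> e * s))
                             ((\<lambda>(e', s). (the_inv_into E \<phi> e', the_inv_into E \<phi> e' * s)) y) = y)"
    using part1[OF assms(1,2,5,6)] by blast
next
  fix u :: 'a
  assume h: "is_identity u \<and> u \<in> E"
  have pu: "\<phi> u = u" using h assms(6) by (auto simp: sim_r_def le_r_def is_identity_def)
  have uE': "u \<in> E'" using h pu assms(5) by (metis bij_betw_imp_surj_on imageI)
  define d :: "'a \<Rightarrow> 'a" where "d = (\<lambda>_. u)"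
  have ED: "E_demigroup E d" using h
    by (auto simp: E_demigroup_def demigroup_def idems_def d_def is_identity_def)
  have "constellation_iso (CdE E d) (CdE E' d) (\<lambda>(e, s). (\<phi> e, \<phi> e * s))"
    using part1[OF assms(1,2,5,6) ED] uE' by (simp add: d_def)
  moreover have "\<And>F. CdE F d = CE F" by (auto simp: CdE_def d_def)
  ultimately show "\<exists>\<rho>. constellation_iso (CE E) (CE E') \<rho>" by auto
next
  fix u z :: 'a
  assume h: "is_identity u \<and> is_zero z \<and> integral_zero z \<and> u \<in> E \<and> z \<in> E"
  have pu: "\<phi> u = u" using h assms(6) by (auto simp: sim_r_def le_r_def is_identity_def)
  have pz: "\<phi> z = z" using h assms(6) by (auto simp: sim_r_def le_r_def is_zero_def)
  have uE': "u \<in> E'" using h pu assms(5) by (metis bij_betw_imp_surj_on imageI)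
  define d :: "'a \<Rightarrow> 'a" where "d = (\<lambda>x. if x = z then z else u)"
  have inj: "inj_on \<phi> E" using assms(5) by (simp add: bij_betw_def)
  have uu: "u * u = u" and zz: "z * z = z" using h by (auto simp: is_identity_def is_zero_def)
  have dm: "demigroup d"
    unfolding demigroup_def d_def idems_def using h uu
    by (auto simp: is_identity_def is_zero_def integral_zero_def)
  have ED: "E_demigroup E d" unfolding E_demigroup_def using dm h
    by (auto simp: d_def is_identity_def is_zero_def)
  have dE': "\<forall>s. d s \<in> E'" using uE' pz h assms(5) unfolding d_def
    by (metis bij_betw_imp_surj_on imageI)
  have de: "\<forall>e\<in>E. d e = d (\<phi> e)"
  proof
    fix e assume e: "e \<in> E"
    show "d e = d (\<phi> e)"
    proof (cases "e = z")
      case True then show ?thesis using pz by simp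
    next
      case False
      then have "\<phi> e \<noteq> z" using pz inj e h by (metis inj_on_def)
      then show ?thesis using False by (simp add: d_def)
    qed
  qed
  have "constellation_iso (CdE E d) (CdE E' d) (\<lambda>(e, s). (\<phi> e, \<phi> e * s))"
    using part1[OF assms(1,2,5,6) ED dE' de] by simp
  moreover have "\<And>F. CdE F d = C0E z F" using h by (intro CdE_C0E[OF _ _ d_def]) auto
  ultimately show "\<exists>\<rho>. constellation_iso (C0E z E) (C0E z E') \<rho>" by auto
qed

end
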